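(* Let $V$ be a finite-dimensional real representation of $\mathbb Z/3$, and write $V\cong m\mathbf 1\oplus n\mathbf 2$. Then $V$ has a basis that is $\mathbb Z/3$-invariant up to sign if and only if $m\ge n$.
   Context: $\mathbf 1$ denotes the trivial one-dimensional real representation of $\mathbb Z/3$ and $\mathbf 2$ the two-dimensional real representation in which a generator acts by rotation by $120^\circ$; every finite-dimensional real $\mathbb Z/3$-representation is isomorphic to $m\mathbf 1\oplus n\mathbf 2$ for unique $m,n\ge0$. A basis is $G$-invariant up to sign if every $g\in G$ maps every basis element to plus or minus a basis element. *)

theory Defs
  imports Complex_Main "Jordan_Normal_Form.Matrix"
begin

text \<open>A finite-dimensional real representation of Z/3 on R^d is given by the
 matrix A of the action of the generator (so A^3 = 1). The generator g^k acts by A^k.\<close>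

definition rot120 :: "nat \<Rightarrow> nat \<Rightarrow> real" where
  "rot120 i j = (if i = j then - 1/2 else if i = 1 \<and> j = 0 then sqrt 3 / 2 else - sqrt 3 / 2)"

text \<open>Standard matrix of m1 \<oplus> n2: block diagonal, m ones followed by n rotation blocks.\<close>
definition std_rep :: "nat \<Rightarrow> nat \<Rightarrow> real mat" where
  "std_rep m n = mat (m + 2*n) (m + 2*n) (\<lambda>(i,j).
     if i < m \<or> j < m then (if i = j then 1 else 0)
     else if (i - m) div 2 = (j - m) div 2 then rot120 ((i - m) mod 2) ((j - m) mod 2)
     else 0)"

definition is_basis_list :: "nat \<Rightarrow> real vec list \<Rightarrow> bool" where
  "is_basis_list d bs = (\<exists>P \<in> carrier_mat d d. invertible_mat P \<and> bs = cols P)"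

definition invariant_up_to_sign :: "real mat \<Rightarrow> real vec list \<Rightarrow> bool" where
  "invariant_up_to_sign A bs =
     (\<forall>k::nat. \<forall>b \<in> set bs. \<exists>c \<in> set bs. (A ^\<^sub>m k) *\<^sub>v b = c \<or> (A ^\<^sub>m k) *\<^sub>v b = - c)"

end

theory Submission
  imports Defs "Jordan_Normal_Form.Determinant"
begin

lemma idx_cases:
  assumes "(i::nat) < m + 2*n"
  obtains "i < m" | j where "j<n" "i = m+2*j" | j where "j<n" "i = m+2*j+1"
proof -
  consider "i < m" | "i \<ge> m" by linarith
  then show ?thesis
  proof cases
    case 2
    define j where "j = (i - m) div 2"
    have "j < n" using assms 2 unfolding j_def by linarith
    moreover have "i = m + 2*j \<or> i = m+2*j+1" unfolding j_def using 2 by presburger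
    ultimately show ?thesis using that by blast
  qed (use that in auto)
qed

lemma std_rep_carrier[simp]: "std_rep m n \<in> carrier_mat (m+2*n) (m+2*n)"
  unfolding std_rep_def by auto

lemma std_rep_dims[simp]: "dim_row (std_rep m n) = m+2*n" "dim_col (std_rep m n) = m+2*n"
  unfolding std_rep_def by auto

lemma std_rep_idx:
  assumes "r < m+2*n" "c < m+2*n" "r < m \<or> c < m"
  shows "std_rep m n $$ (r,c) = (if r = c then 1 else 0)"
  using assms unfolding std_rep_def by auto

lemma std_rep_blk:
  assumes "j < n" "k < n" "s < 2" "t < 2" "r = m+2*j+s" "c = m+2*k+t"
  shows "std_rep m n $$ (r,c) = (if j = k then rot120 s t else 0)"
proof -
  have r: "r < m+2*n" "\<not> r < m" and c: "c < m+2*n" "\<not> c < m" using assms by auto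
  have "(r - m) div 2 = j" "(r-m) mod 2 = s" "(c - m) div 2 = k" "(c-m) mod 2 = t"
    using assms by auto
  then show ?thesis using r c unfolding std_rep_def by simp
qed

lemma S00: "j < n \<Longrightarrow> k < n \<Longrightarrow> std_rep m n $$ (m+2*j, m+2*k) = (if j = k then -1/2 else 0)"
  using std_rep_blk[of j n k 0 0 "m+2*j" m "m+2*k"] by (simp add: rot120_def)
lemma S01: "j < n \<Longrightarrow> k < n \<Longrightarrow> std_rep m n $$ (m+2*j, m+2*k+1) = (if j = k then - sqrt 3/2 else 0)"
  using std_rep_blk[of j n k 0 1 "m+2*j" m "m+2*k+1"] by (simp add: rot120_def)
lemma S10: "j < n \<Longrightarrow> k < n \<Longrightarrow> std_rep m n $$ (m+2*j+1, m+2*k) = (if j = k then sqrt 3/2 else 0)"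
  using std_rep_blk[of j n k 1 0 "m+2*j+1" m "m+2*k"] by (simp add: rot120_def)
lemma S11: "j < n \<Longrightarrow> k < n \<Longrightarrow> std_rep m n $$ (m+2*j+1, m+2*k+1) = (if j = k then -1/2 else 0)"
  using std_rep_blk[of j n k 1 1 "m+2*j+1" m "m+2*k+1"] by (simp add: rot120_def)

definition tr :: "real mat \<Rightarrow> real" where "tr M = (\<Sum>i<dim_row M. M $$ (i,i))"

lemma tr_comm: assumes "X \<in> carrier_mat a b" "Y \<in> carrier_mat b a"
  shows "tr (X * Y) = tr (Y * X)"
proof -
  have "tr (X*Y) = (\<Sum>i<a. \<Sum>k<b. X$$(i,k) * Y$$(k,i))"
    using assms unfolding tr_def by (simp add: scalar_prod_def lessThan_atLeast0)
  also have "\<dots> = (\<Sum>k<b. \<Sum>i<a. Y$$(k,i) * X$$(i,k))"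
    by (subst sum.swap) (simp add: mult.commute)
  also have "\<dots> = tr (Y*X)"
    using assms unfolding tr_def by (simp add: scalar_prod_def lessThan_atLeast0)
  finally show ?thesis .
qed

lemma diag_hi: assumes "i \<in> {m..<m+2*n}" shows "std_rep m n $$ (i,i) = -1/2"
proof -
  have i: "i < m+2*n" "\<not> i < m" using assms by auto
  show ?thesis
  proof (cases rule: idx_cases[OF i(1)])
    case (2 j) then show ?thesis using S00[of j n j m] by simp
  next
    case (3 j) then show ?thesis using S11[of j n j m] by simp
  qed (use i in simp)
qed

lemma tr_std: "tr (std_rep m n) = real m - real n"
proof -
  have "tr (std_rep m n) = (\<Sum>i<m+2*n. std_rep m n $$ (i,i))"
    unfolding tr_def by simp
  also have "\<dots> = (\<Sum>i<m. std_rep m n $$ (i,i)) + (\<Sum>i\<in>{m..<m+2*n}. std_rep m n $$ (i,i))"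
    using sum.atLeastLessThan_concat[of 0 m "m+2*n" "\<lambda>i. std_rep m n $$ (i,i)"] by (simp add: lessThan_atLeast0)
  also have "(\<Sum>i<m. std_rep m n $$ (i,i)) = (\<Sum>i<m. 1)"
    by (rule sum.cong) (simp_all add: std_rep_idx)
  also have "(\<Sum>i\<in>{m..<m+2*n}. std_rep m n $$ (i,i)) = (\<Sum>i\<in>{m..<m+2*n}. -1/2)"
    by (rule sum.cong) (simp_all add: diag_hi)
  finally show ?thesis by simp
qed


lemma mv_neg: fixes M :: "real mat" assumes "M \<in> carrier_mat a b" "v \<in> carrier_vec b"
  shows "M *\<^sub>v (- v) = - (M *\<^sub>v v)"
proof (intro eq_vecI)
  fix i assume "i < dim_vec (- (M *\<^sub>v v))"
  then have i: "i < a" using assms by simp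
  have dv: "dim_vec (row M i) = dim_vec v" using assms by simp
  show "(M *\<^sub>v (- v)) $ i = (- (M *\<^sub>v v)) $ i" using i assms scalar_prod_uminus_right[OF dv] by simp
qed (use assms in simp)

lemma inv_obtain: assumes "B \<in> carrier_mat d d" "invertible_mat B"
  obtains Bi where "Bi \<in> carrier_mat d d" "B * Bi = 1\<^sub>m d" "Bi * B = 1\<^sub>m d"
proof -
  from assms(2) obtain Bi where h: "inverts_mat B Bi" "inverts_mat Bi B"
    unfolding invertible_mat_def by blast
  have 1: "B * Bi = 1\<^sub>m d" using h(1) assms(1) unfolding inverts_mat_def by simp
  have "dim_col Bi = d" using arg_cong[OF 1, of dim_col] by simp
  moreover have "dim_row Bi = d"
    using h(2) assms(1) unfolding inverts_mat_def
    by (metis index_mult_mat(3) index_one_mat(3) carrier_matD(2))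
  ultimately have "Bi \<in> carrier_mat d d" by auto
  moreover have "Bi * B = 1\<^sub>m d" using h(2) \<open>dim_row Bi = d\<close> unfolding inverts_mat_def by simp
  ultimately show ?thesis using that 1 by blast
qed

lemma nec:
  assumes A: "A \<in> carrier_mat d d" and A3: "A ^\<^sub>m 3 = 1\<^sub>m d"
    and B: "B \<in> carrier_mat d d" "invertible_mat B"
    and inv: "invariant_up_to_sign A (cols B)"
  shows "tr A \<ge> 0"
proof -
  obtain Bi where Bi: "Bi \<in> carrier_mat d d" "B * Bi = 1\<^sub>m d" "Bi * B = 1\<^sub>m d"
    using inv_obtain[OF B] by blast
  have BiA: "Bi * A \<in> carrier_mat d d" using Bi A by simp
  have "B * (Bi * A) = (B * Bi) * A" by (rule assoc_mult_mat[symmetric]) (use Bi A B in auto)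
  also have "\<dots> = A" unfolding Bi(2) using A by simp
  finally have "tr A = tr (B * (Bi * A))" by simp
  also have "\<dots> = tr ((Bi * A) * B)" by (rule tr_comm[OF B(1) BiA])
  finally have trA: "tr A = tr (Bi * A * B)" .
  have colB: "Bi *\<^sub>v col B j = unit_vec d j" if "j < d" for j
  proof -
    have "Bi *\<^sub>v col B j = col (Bi * B) j" by (rule col_mult2[symmetric]) (use Bi B that in auto)
    then show ?thesis using Bi that by simp
  qed
  have A1: "A ^\<^sub>m 1 = A" using A by simp
  have diag: "(Bi * A * B) $$ (i,i) \<ge> 0" if i: "i < d" for i
  proof -
    have bi: "col B i \<in> set (cols B)" using B i by (metis cols_length cols_nth carrier_matD(2) nth_mem)
    have bic: "col B i \<in> carrier_vec d" using B i by simp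
    have e: "(Bi * A * B) $$ (i,i) = (Bi *\<^sub>v (A *\<^sub>v col B i)) $ i"
    proof -
      have "(Bi * A * B) $$ (i,i) = col (Bi * A * B) i $ i"
        by (rule index_col[symmetric]) (use i Bi A B in auto)
      also have "col (Bi * A * B) i = (Bi * A) *\<^sub>v col B i" by (rule col_mult2[OF BiA B(1) i])
      also have "\<dots> = Bi *\<^sub>v (A *\<^sub>v col B i)" by (rule assoc_mult_mat_vec[OF Bi(1) A bic])
      finally show ?thesis .
    qed
    from inv bi obtain c where c: "c \<in> set (cols B)" "A *\<^sub>v col B i = c \<or> A *\<^sub>v col B i = - c"
      unfolding invariant_up_to_sign_def using A1 by metis
    from c(1) obtain j where j: "j < d" "c = col B j" using B
      by (metis cols_length cols_nth carrier_matD(2) in_set_conv_nth)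
    have cc: "c \<in> carrier_vec d" using j B by simp
    from c(2) show ?thesis
    proof
      assume "A *\<^sub>v col B i = c"
      then show ?thesis using e colB[OF j(1)] j i by simp
    next
      assume neg: "A *\<^sub>v col B i = - c"
      have val: "(Bi * A * B) $$ (i,i) = - (unit_vec d j $ i)"
        using e neg mv_neg[OF Bi(1) cc] colB[OF j(1)] j i by simp
      show ?thesis
      proof (cases "j = i")
        case False then show ?thesis using val i j by simp
      next
        case True
        let ?b = "col B i"
        have Ab: "A *\<^sub>v ?b = - ?b" using neg True j by simp
        have p3: "A ^\<^sub>m 3 = A * A * A" using A by (simp add: numeral_3_eq_3)
        have "?b = (A * A * A) *\<^sub>v ?b" using A3 bic p3 by (metis one_mult_mat_vec)
        also have "\<dots> = (A * A) *\<^sub>v (A *\<^sub>v ?b)" by (rule assoc_mult_mat_vec) (use A bic in auto)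
        also have "\<dots> = A *\<^sub>v (A *\<^sub>v (A *\<^sub>v ?b))" by (rule assoc_mult_mat_vec) (use A bic in auto)
        also have "\<dots> = - ?b" using Ab mv_neg[OF A bic] by simp
        finally have "?b = - ?b" .
        then have bb: "\<And>r. ?b $ r = (- ?b) $ r" by simp
        have "?b = 0\<^sub>v d"
        proof (rule eq_vecI)
          fix r assume "r < dim_vec (0\<^sub>v d :: real vec)"
          then have r: "r < d" by simp
          have "(- ?b) $ r = - (?b $ r)" by (rule index_uminus_vec(1)) (use r B in auto)
          then show "?b $ r = 0\<^sub>v d $ r" using bb[of r] r by simp
        qed (use B in simp)
        then have "Bi *\<^sub>v ?b = 0\<^sub>v d" using Bi by auto
        then show ?thesis using colB[OF i] i by simp
      qed
    qed
  qed
  have "tr (Bi * A * B) = (\<Sum>i<d. (Bi * A * B) $$ (i,i))" unfolding tr_def using Bi by simp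
  also have "\<dots> \<ge> 0" using diag by (intro sum_nonneg) auto
  finally show ?thesis using trA by simp
qed


lemma mv_unit: fixes M :: "real mat" assumes "M \<in> carrier_mat a b" "i < b"
  shows "M *\<^sub>v unit_vec b i = col M i"
proof (rule eq_vecI)
  fix r assume "r < dim_vec (col M i)"
  then have r: "r < dim_row M" by simp
  have "(M *\<^sub>v unit_vec b i) $ r = row M r \<bullet> unit_vec b i" using r by simp
  also have "\<dots> = row M r $ i" using assms(2) by simp
  also have "\<dots> = M $$ (r, i)" using r assms by simp
  finally show "(M *\<^sub>v unit_vec b i) $ r = col M i $ r" using r assms by simp
qed simp

lemma mv_add: fixes M :: "real mat" assumes "M \<in> carrier_mat a b" "x \<in> carrier_vec b" "y \<in> carrier_vec b"
  shows "M *\<^sub>v (x + y) = M *\<^sub>v x + M *\<^sub>v y"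
  using mult_add_distrib_mat_vec[OF assms] .

lemma mv_smult: fixes M :: "real mat" assumes "M \<in> carrier_mat a b" "x \<in> carrier_vec b"
  shows "M *\<^sub>v (k \<cdot>\<^sub>v x) = k \<cdot>\<^sub>v (M *\<^sub>v x)"
  using mult_mat_vec[OF assms] .

lemma s3: "sqrt 3 * sqrt 3 = (3::real)" using real_sqrt_mult_self[of 3] by simp

definition cv :: "nat \<Rightarrow> nat \<Rightarrow> nat \<Rightarrow> real vec" where
"cv m n c = (let d = m+2*n; j = (c-m) div 2 in
  if c < n then unit_vec d c + unit_vec d (m+2*c)
  else if c < m then unit_vec d c
  else if even (c-m) then unit_vec d j + (-1/2) \<cdot>\<^sub>v unit_vec d (m+2*j) + (sqrt 3/2) \<cdot>\<^sub>v unit_vec d (m+2*j+1)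
  else unit_vec d j + (-1/2) \<cdot>\<^sub>v unit_vec d (m+2*j) + (- sqrt 3/2) \<cdot>\<^sub>v unit_vec d (m+2*j+1))"

definition dv :: "nat \<Rightarrow> nat \<Rightarrow> nat \<Rightarrow> real vec" where
"dv m n c = (let d = m+2*n; j = (c-m) div 2 in
  if c < n then (1/3) \<cdot>\<^sub>v (unit_vec d c + unit_vec d (m+2*c) + unit_vec d (m+2*c+1))
  else if c < m then unit_vec d c
  else if even (c-m) then (2/3) \<cdot>\<^sub>v unit_vec d j + (-1/3) \<cdot>\<^sub>v unit_vec d (m+2*j) + (-1/3) \<cdot>\<^sub>v unit_vec d (m+2*j+1)
  else (1/sqrt 3) \<cdot>\<^sub>v unit_vec d (m+2*j) + (-1/sqrt 3) \<cdot>\<^sub>v unit_vec d (m+2*j+1))"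

lemma cv_lo: "c < n \<Longrightarrow> cv m n c = unit_vec (m+2*n) c + unit_vec (m+2*n) (m+2*c)"
  unfolding cv_def Let_def by simp
lemma cv_mid: "n \<le> c \<Longrightarrow> c < m \<Longrightarrow> cv m n c = unit_vec (m+2*n) c"
  unfolding cv_def Let_def by simp
lemma cv_p: "n \<le> m \<Longrightarrow> cv m n (m+2*j) = unit_vec (m+2*n) j + (-1/2) \<cdot>\<^sub>v unit_vec (m+2*n) (m+2*j) + (sqrt 3/2) \<cdot>\<^sub>v unit_vec (m+2*n) (m+2*j+1)"
  unfolding cv_def Let_def by simp
lemma cv_q: "n \<le> m \<Longrightarrow> cv m n (m+2*j+1) = unit_vec (m+2*n) j + (-1/2) \<cdot>\<^sub>v unit_vec (m+2*n) (m+2*j) + (- sqrt 3/2) \<cdot>\<^sub>v unit_vec (m+2*n) (m+2*j+1)"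
  unfolding cv_def Let_def by simp
lemma dv_lo: "c < n \<Longrightarrow> dv m n c = (1/3) \<cdot>\<^sub>v (unit_vec (m+2*n) c + unit_vec (m+2*n) (m+2*c) + unit_vec (m+2*n) (m+2*c+1))"
  unfolding dv_def Let_def by simp
lemma dv_mid: "n \<le> c \<Longrightarrow> c < m \<Longrightarrow> dv m n c = unit_vec (m+2*n) c"
  unfolding dv_def Let_def by simp
lemma dv_p: "n \<le> m \<Longrightarrow> dv m n (m+2*j) = (2/3) \<cdot>\<^sub>v unit_vec (m+2*n) j + (-1/3) \<cdot>\<^sub>v unit_vec (m+2*n) (m+2*j) + (-1/3) \<cdot>\<^sub>v unit_vec (m+2*n) (m+2*j+1)"
  unfolding dv_def Let_def by simp
lemma dv_q: "n \<le> m \<Longrightarrow> dv m n (m+2*j+1) = (1/sqrt 3) \<cdot>\<^sub>v unit_vec (m+2*n) (m+2*j) + (-1/sqrt 3) \<cdot>\<^sub>v unit_vec (m+2*n) (m+2*j+1)"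
  unfolding dv_def Let_def by simp

lemma cv_carrier: "cv m n c \<in> carrier_vec (m+2*n)"
  unfolding cv_def Let_def by auto
lemma dv_carrier: "dv m n c \<in> carrier_vec (m+2*n)"
  unfolding dv_def Let_def by auto


lemma S10': "j < n \<Longrightarrow> k < n \<Longrightarrow> std_rep m n $$ (Suc (m+2*j), m+2*k) = (if j = k then sqrt 3/2 else 0)"
  using S10 by simp
lemma S11': "j < n \<Longrightarrow> k < n \<Longrightarrow> std_rep m n $$ (Suc (m+2*j), Suc (m+2*k)) = (if j = k then -1/2 else 0)"
  using S11 by simp
lemma S01': "j < n \<Longrightarrow> k < n \<Longrightarrow> std_rep m n $$ (m+2*j, Suc (m+2*k)) = (if j = k then - sqrt 3/2 else 0)"
  using S01 by simp

lemma col_S1: assumes "c < m" shows "col (std_rep m n) c = unit_vec (m+2*n) c"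
proof (rule eq_vecI)
  fix r assume "r < dim_vec (unit_vec (m+2*n) c)"
  then have r: "r < m+2*n" by simp
  show "col (std_rep m n) c $ r = unit_vec (m+2*n) c $ r"
    using r assms by (simp add: std_rep_idx)
qed (simp)

lemma col_S2: assumes "j < n" shows "col (std_rep m n) (m+2*j) =
   (-1/2) \<cdot>\<^sub>v unit_vec (m+2*n) (m+2*j) + (sqrt 3/2) \<cdot>\<^sub>v unit_vec (m+2*n) (m+2*j+1)"
proof (rule eq_vecI)
  fix r assume "r < dim_vec ((-1/2) \<cdot>\<^sub>v unit_vec (m+2*n) (m+2*j) + (sqrt 3/2) \<cdot>\<^sub>v unit_vec (m+2*n) (m+2*j+1))"
  then have r: "r < m+2*n" by simp
  show "col (std_rep m n) (m+2*j) $ r = ((-1/2) \<cdot>\<^sub>v unit_vec (m+2*n) (m+2*j) + (sqrt 3/2) \<cdot>\<^sub>v unit_vec (m+2*n) (m+2*j+1)) $ r"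
  proof (cases rule: idx_cases[OF r])
    case 1 then show ?thesis using r assms by (simp add: std_rep_idx)
  next
    case (2 k) then show ?thesis using r assms by (simp add: S00)
  next
    case (3 k) then show ?thesis using r assms by (simp add: S10')
  qed
qed (simp)

lemma col_S3: assumes "j < n" shows "col (std_rep m n) (m+2*j+1) =
   (- sqrt 3/2) \<cdot>\<^sub>v unit_vec (m+2*n) (m+2*j) + (-1/2) \<cdot>\<^sub>v unit_vec (m+2*n) (m+2*j+1)"
proof (rule eq_vecI)
  fix r assume "r < dim_vec ((- sqrt 3/2) \<cdot>\<^sub>v unit_vec (m+2*n) (m+2*j) + (-1/2) \<cdot>\<^sub>v unit_vec (m+2*n) (m+2*j+1))"
  then have r: "r < m+2*n" by simp
  show "col (std_rep m n) (m+2*j+1) $ r = ((- sqrt 3/2) \<cdot>\<^sub>v unit_vec (m+2*n) (m+2*j) + (-1/2) \<cdot>\<^sub>v unit_vec (m+2*n) (m+2*j+1)) $ r"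
  proof (cases rule: idx_cases[OF r])
    case 1 then show ?thesis using r assms by (simp add: std_rep_idx)
  next
    case (2 k) then show ?thesis using r assms by (simp add: S01')
  next
    case (3 k) then show ?thesis using r assms by (simp add: S11')
  qed
qed (simp)


lemmas Slin = mv_add[OF std_rep_carrier] mv_smult[OF std_rep_carrier]

lemma Su: "i < m+2*n \<Longrightarrow> std_rep m n *\<^sub>v unit_vec (m+2*n) i = col (std_rep m n) i"
  by (rule mv_unit[OF std_rep_carrier])

lemma S_cv_p: assumes "n \<le> m" "j < n"
  shows "std_rep m n *\<^sub>v cv m n (m+2*j) = cv m n (m+2*j+1)"
proof -
  have "std_rep m n *\<^sub>v cv m n (m+2*j) = unit_vec (m+2*n) j +
     (-1/2) \<cdot>\<^sub>v ((-1/2) \<cdot>\<^sub>v unit_vec (m+2*n) (m+2*j) + (sqrt 3/2) \<cdot>\<^sub>v unit_vec (m+2*n) (m+2*j+1)) +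
     (sqrt 3/2) \<cdot>\<^sub>v ((- sqrt 3/2) \<cdot>\<^sub>v unit_vec (m+2*n) (m+2*j) + (-1/2) \<cdot>\<^sub>v unit_vec (m+2*n) (m+2*j+1))"
    using assms by (simp add: cv_p Slin Su col_S1 col_S2 col_S3 del: One_nat_def add_Suc_right)
  also have "\<dots> = cv m n (m+2*j+1)"
    unfolding cv_q[OF assms(1)] using assms
    by (intro eq_vecI) (simp_all add: s3)
  finally show ?thesis .
qed


lemma S_cv_q: assumes "n \<le> m" "j < n"
  shows "std_rep m n *\<^sub>v cv m n (m+2*j+1) = cv m n j"
proof -
  have "std_rep m n *\<^sub>v cv m n (m+2*j+1) = unit_vec (m+2*n) j +
     (-1/2) \<cdot>\<^sub>v ((-1/2) \<cdot>\<^sub>v unit_vec (m+2*n) (m+2*j) + (sqrt 3/2) \<cdot>\<^sub>v unit_vec (m+2*n) (m+2*j+1)) +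
     (- sqrt 3/2) \<cdot>\<^sub>v ((- sqrt 3/2) \<cdot>\<^sub>v unit_vec (m+2*n) (m+2*j) + (-1/2) \<cdot>\<^sub>v unit_vec (m+2*n) (m+2*j+1))"
    using assms by (simp add: cv_q Slin Su col_S1 col_S2 col_S3 del: One_nat_def add_Suc_right)
  also have "\<dots> = cv m n j"
    unfolding cv_lo[OF assms(2)] using assms
    by (intro eq_vecI) (simp_all add: s3)
  finally show ?thesis .
qed

lemma S_cv_lo: assumes "n \<le> m" "c < n"
  shows "std_rep m n *\<^sub>v cv m n c = cv m n (m+2*c)"
proof -
  have "std_rep m n *\<^sub>v cv m n c = unit_vec (m+2*n) c +
     ((-1/2) \<cdot>\<^sub>v unit_vec (m+2*n) (m+2*c) + (sqrt 3/2) \<cdot>\<^sub>v unit_vec (m+2*n) (m+2*c+1))"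
    using assms by (simp add: cv_lo Slin Su col_S1 col_S2 col_S3 del: One_nat_def add_Suc_right)
  also have "\<dots> = cv m n (m+2*c)"
    unfolding cv_p[OF assms(1)] using assms
    by (intro eq_vecI) (simp_all add: s3)
  finally show ?thesis .
qed

lemma S_cv_mid: assumes "n \<le> c" "c < m"
  shows "std_rep m n *\<^sub>v cv m n c = cv m n c"
  using assms by (simp add: cv_mid Su col_S1)

definition Cm :: "nat \<Rightarrow> nat \<Rightarrow> real mat" where
  "Cm m n = mat (m+2*n) (m+2*n) (\<lambda>(r,c). cv m n c $ r)"
definition Dm :: "nat \<Rightarrow> nat \<Rightarrow> real mat" where
  "Dm m n = mat (m+2*n) (m+2*n) (\<lambda>(r,c). dv m n c $ r)"

lemma Cm_dims[simp]: "dim_row (Cm m n) = m+2*n" "dim_col (Cm m n) = m+2*n" unfolding Cm_def by auto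
lemma Dm_dims[simp]: "dim_row (Dm m n) = m+2*n" "dim_col (Dm m n) = m+2*n" unfolding Dm_def by auto
lemma Cm_carrier[simp]: "Cm m n \<in> carrier_mat (m+2*n) (m+2*n)" unfolding Cm_def by simp
lemma Dm_carrier[simp]: "Dm m n \<in> carrier_mat (m+2*n) (m+2*n)" unfolding Dm_def by simp

lemma col_Cm: "c < m+2*n \<Longrightarrow> col (Cm m n) c = cv m n c"
  unfolding Cm_def using cv_carrier[of m n c] by (intro eq_vecI) auto
lemma col_Dm: "c < m+2*n \<Longrightarrow> col (Dm m n) c = dv m n c"
  unfolding Dm_def using dv_carrier[of m n c] by (intro eq_vecI) auto

lemmas Dlin = mv_add[OF Dm_carrier] mv_smult[OF Dm_carrier]

lemma Du: "i < m+2*n \<Longrightarrow> Dm m n *\<^sub>v unit_vec (m+2*n) i = dv m n i"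
  using mv_unit[OF Dm_carrier] col_Dm by metis

lemma D_cv_lo: assumes "n \<le> m" "c < n"
  shows "Dm m n *\<^sub>v cv m n c = unit_vec (m+2*n) c"
proof -
  have "Dm m n *\<^sub>v cv m n c = dv m n c + dv m n (m+2*c)"
    using assms by (simp add: cv_lo Dlin Du del: One_nat_def add_Suc_right)
  also have "\<dots> = unit_vec (m+2*n) c"
    unfolding dv_lo[OF assms(2)] dv_p[OF assms(1)] using assms
    by (intro eq_vecI) simp_all
  finally show ?thesis .
qed

lemma D_cv_mid: assumes "n \<le> c" "c < m"
  shows "Dm m n *\<^sub>v cv m n c = unit_vec (m+2*n) c"
  using assms by (simp add: cv_mid Du dv_mid)

lemma D_cv_p: assumes "n \<le> m" "j < n"
  shows "Dm m n *\<^sub>v cv m n (m+2*j) = unit_vec (m+2*n) (m+2*j)"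
proof -
  have "Dm m n *\<^sub>v cv m n (m+2*j) = dv m n j + (-1/2) \<cdot>\<^sub>v dv m n (m+2*j) + (sqrt 3/2) \<cdot>\<^sub>v dv m n (m+2*j+1)"
    using assms by (simp add: cv_p Dlin Du del: One_nat_def add_Suc_right)
  also have "\<dots> = unit_vec (m+2*n) (m+2*j)"
    unfolding dv_lo[OF assms(2)] dv_p[OF assms(1)] dv_q[OF assms(1)] using assms
    by (intro eq_vecI) (simp_all add: s3)
  finally show ?thesis .
qed

lemma D_cv_q: assumes "n \<le> m" "j < n"
  shows "Dm m n *\<^sub>v cv m n (m+2*j+1) = unit_vec (m+2*n) (m+2*j+1)"
proof -
  have "Dm m n *\<^sub>v cv m n (m+2*j+1) = dv m n j + (-1/2) \<cdot>\<^sub>v dv m n (m+2*j) + (- sqrt 3/2) \<cdot>\<^sub>v dv m n (m+2*j+1)"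
    using assms by (simp add: cv_q Dlin Du del: One_nat_def add_Suc_right)
  also have "\<dots> = unit_vec (m+2*n) (m+2*j+1)"
    unfolding dv_lo[OF assms(2)] dv_p[OF assms(1)] dv_q[OF assms(1)] using assms
    by (intro eq_vecI) (simp_all add: s3)
  finally show ?thesis .
qed



lemma pow_carrier: "A \<in> carrier_mat d d \<Longrightarrow> A ^\<^sub>m k \<in> carrier_mat d d"
  by (metis carrier_matI pow_mat_dim_square)

lemma D_cv: assumes "n \<le> m" "c < m+2*n"
  shows "Dm m n *\<^sub>v cv m n c = unit_vec (m+2*n) c"
proof (cases rule: idx_cases[OF assms(2)])
  case 1 then show ?thesis using assms D_cv_lo D_cv_mid by (cases "c < n") auto
next
  case (2 j) then show ?thesis using assms D_cv_p by simp
next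
  case (3 j) then show ?thesis using assms D_cv_q by simp
qed

lemma S_cv: assumes "n \<le> m" "c < m+2*n"
  shows "\<exists>c' < m+2*n. std_rep m n *\<^sub>v cv m n c = cv m n c'"
proof (cases rule: idx_cases[OF assms(2)])
  case 1 then show ?thesis
  proof (cases "c < n")
    case True then show ?thesis using assms S_cv_lo[OF assms(1) True] by (intro exI[of _ "m+2*c"]) auto
  next
    case False then show ?thesis using assms 1 S_cv_mid[of n c m] by (intro exI[of _ c]) simp
  qed
next
  case (2 j) then show ?thesis using assms S_cv_p[OF assms(1) 2(1)] by (intro exI[of _ "m+2*j+1"]) auto
next
  case (3 j) then show ?thesis using assms S_cv_q[OF assms(1) 3(1)] by (intro exI[of _ j]) auto
qed

lemma S_pow_cv: assumes "n \<le> m" "c < m+2*n"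
  shows "\<exists>c' < m+2*n. std_rep m n ^\<^sub>m k *\<^sub>v cv m n c = cv m n c'"
  using assms(2)
proof (induction k arbitrary: c)
  case 0 then show ?case using cv_carrier[of m n c] by auto
next
  case (Suc k)
  obtain c1 where c1: "c1 < m+2*n" "std_rep m n *\<^sub>v cv m n c = cv m n c1"
    using S_cv[OF assms(1) Suc.prems] by blast
  have "std_rep m n ^\<^sub>m Suc k *\<^sub>v cv m n c = (std_rep m n ^\<^sub>m k * std_rep m n) *\<^sub>v cv m n c" by simp
  also have "\<dots> = std_rep m n ^\<^sub>m k *\<^sub>v (std_rep m n *\<^sub>v cv m n c)"
    by (rule assoc_mult_mat_vec) (auto simp: pow_carrier cv_carrier)
  finally show ?case using Suc.IH[OF c1(1)] c1(2) by simp
qed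

lemma DC: assumes "n \<le> m" shows "Dm m n * Cm m n = 1\<^sub>m (m+2*n)"
proof (rule eq_matI)
  fix i j assume ij: "i < dim_row (1\<^sub>m (m+2*n) :: real mat)" "j < dim_col (1\<^sub>m (m+2*n) :: real mat)"
  then have i: "i < m+2*n" and j: "j < m+2*n" by auto
  have "(Dm m n * Cm m n) $$ (i,j) = col (Dm m n * Cm m n) j $ i"
    by (rule index_col[symmetric]) (use i j in auto)
  also have "col (Dm m n * Cm m n) j = Dm m n *\<^sub>v col (Cm m n) j"
    by (rule col_mult2) (use j in auto)
  also have "\<dots> = unit_vec (m+2*n) j" using col_Cm[OF j] D_cv[OF assms j] by simp
  finally show "(Dm m n * Cm m n) $$ (i,j) = 1\<^sub>m (m+2*n) $$ (i,j)" using i j by simp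
qed auto

lemma Apow: assumes A: "A \<in> carrier_mat d d" and S: "S \<in> carrier_mat d d"
  and P: "P \<in> carrier_mat d d" and Q: "Q \<in> carrier_mat d d"
  and QP: "Q * P = 1\<^sub>m d" and APSQ: "A = P * S * Q" and v: "v \<in> carrier_vec d"
shows "A ^\<^sub>m k *\<^sub>v (P *\<^sub>v v) = P *\<^sub>v (S ^\<^sub>m k *\<^sub>v v)"
  using v
proof (induction k arbitrary: v)
  case 0 then show ?case using A S P by auto
next
  case (Suc k)
  have Av: "A *\<^sub>v (P *\<^sub>v v) = P *\<^sub>v (S *\<^sub>v v)"
  proof -
    have "A *\<^sub>v (P *\<^sub>v v) = (P * S * Q) *\<^sub>v (P *\<^sub>v v)" using APSQ by simp
    also have "\<dots> = (P * S) *\<^sub>v (Q *\<^sub>v (P *\<^sub>v v))"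
      by (rule assoc_mult_mat_vec) (use P S Q Suc.prems in auto)
    also have "Q *\<^sub>v (P *\<^sub>v v) = (Q * P) *\<^sub>v v"
      by (rule assoc_mult_mat_vec[symmetric]) (use P Q Suc.prems in auto)
    also have "\<dots> = v" using QP Suc.prems by simp
    also have "(P * S) *\<^sub>v v = P *\<^sub>v (S *\<^sub>v v)"
      by (rule assoc_mult_mat_vec) (use P S Suc.prems in auto)
    finally show ?thesis .
  qed
  have "A ^\<^sub>m Suc k *\<^sub>v (P *\<^sub>v v) = (A ^\<^sub>m k * A) *\<^sub>v (P *\<^sub>v v)" by simp
  also have "\<dots> = A ^\<^sub>m k *\<^sub>v (A *\<^sub>v (P *\<^sub>v v))"
    by (rule assoc_mult_mat_vec) (use A P Suc.prems in \<open>auto simp: pow_carrier\<close>)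
  also have "\<dots> = P *\<^sub>v (S ^\<^sub>m k *\<^sub>v (S *\<^sub>v v))" using Av Suc.IH[of "S *\<^sub>v v"] S Suc.prems by simp
  also have "S ^\<^sub>m k *\<^sub>v (S *\<^sub>v v) = (S ^\<^sub>m k * S) *\<^sub>v v"
    by (rule assoc_mult_mat_vec[symmetric]) (use S Suc.prems in \<open>auto simp: pow_carrier\<close>)
  finally show ?case by simp
qed


theorem proposition2p21:
  fixes A :: "real mat" and d m n :: nat
  assumes "A \<in> carrier_mat d d"
    and "A ^\<^sub>m 3 = 1\<^sub>m d"
    and "similar_mat A (std_rep m n)"
  shows "(\<exists>bs. is_basis_list d bs \<and> invariant_up_to_sign A bs) \<longleftrightarrow> m \<ge> n"
proof -
  let ?S = "std_rep m n"
  obtain P Q where w: "similar_mat_wit A ?S P Q" using assms(3) unfolding similar_mat_def by blast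
  have Ad: "dim_row A = d" using assms(1) by simp
  from w have car: "?S \<in> carrier_mat d d" "P \<in> carrier_mat d d" "Q \<in> carrier_mat d d"
    and PQ: "P * Q = 1\<^sub>m d" and QP: "Q * P = 1\<^sub>m d" and APSQ: "A = P * ?S * Q"
    unfolding similar_mat_wit_def Let_def Ad by auto
  have dd: "d = m+2*n" using carrier_matD(1)[OF car(1)] by simp
  have trA: "tr A = real m - real n"
  proof -
    have "tr A = tr ((P * ?S) * Q)" using APSQ by simp
    also have "\<dots> = tr (Q * (P * ?S))" by (rule tr_comm) (use car in auto)
    also have "Q * (P * ?S) = (Q * P) * ?S" by (rule assoc_mult_mat[symmetric]) (use car in auto)
    also have "\<dots> = ?S" unfolding QP using dd by simp
    finally show ?thesis using tr_std by simp
  qed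
  show ?thesis
  proof
    assume "\<exists>bs. is_basis_list d bs \<and> invariant_up_to_sign A bs"
    then obtain B where B: "B \<in> carrier_mat d d" "invertible_mat B" "invariant_up_to_sign A (cols B)"
      unfolding is_basis_list_def by blast
    have "tr A \<ge> 0" by (rule nec[OF assms(1,2) B])
    then show "m \<ge> n" using trA by simp
  next
    assume mn: "n \<le> m"
    let ?B = "P * Cm m n"
    have Bc: "?B \<in> carrier_mat d d" using car dd by simp
    have BD: "?B * (Dm m n * Q) = 1\<^sub>m d"
    proof -
      have CD: "Cm m n * Dm m n = 1\<^sub>m d"
        using mat_mult_left_right_inverse[OF Dm_carrier Cm_carrier DC[OF mn]] dd by simp
      have "?B * (Dm m n * Q) = P * (Cm m n * (Dm m n * Q))"
        by (rule assoc_mult_mat) (use car dd in auto)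
      also have "Cm m n * (Dm m n * Q) = (Cm m n * Dm m n) * Q"
        by (rule assoc_mult_mat[symmetric]) (use car dd in auto)
      also have "\<dots> = Q" unfolding CD using car by simp
      finally show ?thesis using PQ by simp
    qed
    have DQc: "Dm m n * Q \<in> carrier_mat d d" using Dm_carrier[of m n] car(3) dd mult_carrier_mat by metis
    have DB: "(Dm m n * Q) * ?B = 1\<^sub>m d" by (rule mat_mult_left_right_inverse[OF Bc DQc BD])
    have invB: "invertible_mat ?B"
      unfolding invertible_mat_def inverts_mat_def square_mat.simps
      using BD DB Bc DQc car dd by (intro conjI exI[of _ "Dm m n * Q"]) auto
    have colB: "col ?B c = P *\<^sub>v cv m n c" if "c < d" for c
      using col_mult2[of P d d "Cm m n" d c] car that dd col_Cm[of c m n] by simp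
    have inv: "invariant_up_to_sign A (cols ?B)"
      unfolding invariant_up_to_sign_def
    proof (intro allI ballI)
      fix k b assume b: "b \<in> set (cols ?B)"
      then obtain c where c: "c < d" "b = col ?B c" using Bc
        by (metis cols_length cols_nth carrier_matD(2) in_set_conv_nth)
      obtain c' where c': "c' < d" "?S ^\<^sub>m k *\<^sub>v cv m n c = cv m n c'"
        using S_pow_cv[OF mn, of c k] c dd by auto
      have "A ^\<^sub>m k *\<^sub>v b = P *\<^sub>v (?S ^\<^sub>m k *\<^sub>v cv m n c)"
        using Apow[OF assms(1) car QP APSQ, of "cv m n c" k] c colB cv_carrier[of m n c] dd by simp
      also have "\<dots> = col ?B c'" using c' colB by simp
      finally have "A ^\<^sub>m k *\<^sub>v b = col ?B c'" .
      moreover have "col ?B c' \<in> set (cols ?B)" using c' Bc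
        by (metis cols_length cols_nth carrier_matD(2) nth_mem)
      ultimately show "\<exists>c\<in>set (cols ?B). A ^\<^sub>m k *\<^sub>v b = c \<or> A ^\<^sub>m k *\<^sub>v b = - c" by blast
    qed
    show "\<exists>bs. is_basis_list d bs \<and> invariant_up_to_sign A bs"
      unfolding is_basis_list_def using Bc invB inv by blast
  qed
qed

end
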